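(* Let $A_1,A_2,B_1,B_2$ be $\{0,1\}$-valued random variables. Suppose a classical probability model for $(A_1,A_2,B_1)$ satisfies $\langle A_1\rangle=\langle A_2\rangle=\langle B_1\rangle=\tfrac12$ and $\langle A_1B_1\rangle=\langle A_2B_1\rangle=\tfrac14+\tfrac{\sqrt2}{8}$. Then in this model $\tfrac{\sqrt2}{4}\le\langle A_1A_2\rangle\le\tfrac12$. Suppose a classical probability model for $(A_1,A_2,B_2)$ satisfies $\langle A_1\rangle=\langle A_2\rangle=\langle B_2\rangle=\tfrac12$, $\langle A_1B_2\rangle=\tfrac14+\tfrac{\sqrt2}{8}$ and $\langle A_2B_2\rangle=\tfrac14-\tfrac{\sqrt2}{8}$. Then in this model $0\le\langle A_1A_2\rangle\le\tfrac12-\tfrac{\sqrt2}{4}$. In particular, since $\tfrac12-\tfrac{\sqrt2}{4}<\tfrac14<\tfrac{\sqrt2}{4}$, no common value of $\langle A_1A_2\rangle$ is possible in the two models.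
   Context: A classical probability model for a finite set of $\{0,1\}$-valued variables is a probability space on which they are realized as indicator functions; $\langle\cdot\rangle$ denotes expectation in that model. The given numbers are the quantum-mechanical predictions for two spin-$1/2$ particles in the singlet state $\tfrac{1}{\sqrt2}(|+-\rangle-|-+\rangle)$, with $A_1=\tfrac{1+\sigma_x}{2}$, $A_2=\tfrac{1+\sigma_z}{2}$ on the first particle and $B_1=\tfrac12-\tfrac{\tau_x+\tau_z}{2\sqrt2}$, $B_2=\tfrac12-\tfrac{\tau_x-\tau_z}{2\sqrt2}$ on the second ($\sigma_i,\tau_i$ Pauli matrices on the first and second particle). *)

theory Defs
  imports "HOL-Probability.Probability"
begin

definition bin_rv :: "'a measure \<Rightarrow> ('a \<Rightarrow> real) \<Rightarrow> bool" where
  "bin_rv M X \<longleftrightarrow> X \<in> borel_measurable M \<and> (\<forall>x\<in>space M. X x = 0 \<or> X x = 1)"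

definition classical_model3 ::
  "'a measure \<Rightarrow> ('a \<Rightarrow> real) \<Rightarrow> ('a \<Rightarrow> real) \<Rightarrow> ('a \<Rightarrow> real) \<Rightarrow> bool" where
  "classical_model3 M X Y Z \<longleftrightarrow> prob_space M \<and> bin_rv M X \<and> bin_rv M Y \<and> bin_rv M Z"

end

theory Submission
  imports Defs
begin

lemma bin3: "(a::real) = 0 \<or> a = 1 \<Longrightarrow> b = 0 \<or> b = 1 \<Longrightarrow> c = 0 \<or> c = 1 \<Longrightarrow>
  a*b \<le> a \<and> a*c+b*c-c \<le> a*b \<and> a*b \<le> a - a*c + b*c \<and> (a*b=0 \<or> a*b=1) \<and> 0 \<le> a*b"
  by auto

lemma bin_int:
  assumes "prob_space M" "bin_rv M X" shows "integrable M X"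
proof -
  interpret prob_space M by fact
  show ?thesis
    using assms(2) unfolding bin_rv_def
    by (intro integrable_const_bound[where B=1]) (auto intro!: AE_I2)
qed

lemma bin_prod: "bin_rv M X \<Longrightarrow> bin_rv M Y \<Longrightarrow> bin_rv M (\<lambda>x. X x * Y x)"
  unfolding bin_rv_def using bin3[of "X x" "Y x" "Y x" for x] by auto

lemma lowerb:
  assumes "classical_model3 M X Y Z"
  shows "integral\<^sup>L M (\<lambda>x. X x * Z x) + integral\<^sup>L M (\<lambda>x. Y x * Z x) - integral\<^sup>L M Z
         \<le> integral\<^sup>L M (\<lambda>x. X x * Y x)"
proof -
  have p: "prob_space M" and b: "bin_rv M X" "bin_rv M Y" "bin_rv M Z"
    using assms unfolding classical_model3_def by auto
  have i: "integrable M (\<lambda>x. X x * Z x)" "integrable M (\<lambda>x. Y x * Z x)" "integrable M Z"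
     "integrable M (\<lambda>x. X x * Y x)"
    using bin_int[OF p] bin_prod b by auto
  have "integral\<^sup>L M (\<lambda>x. X x * Z x + Y x * Z x - Z x) \<le> integral\<^sup>L M (\<lambda>x. X x * Y x)"
    apply (rule integral_mono)
    using i b bin3[of "X x" "Y x" "Z x" for x] unfolding bin_rv_def by auto
  thus ?thesis using i by simp
qed

lemma upperb:
  assumes "classical_model3 M X Y Z"
  shows "integral\<^sup>L M (\<lambda>x. X x * Y x)
         \<le> integral\<^sup>L M X - integral\<^sup>L M (\<lambda>x. X x * Z x) + integral\<^sup>L M (\<lambda>x. Y x * Z x)"
proof -
  have p: "prob_space M" and b: "bin_rv M X" "bin_rv M Y" "bin_rv M Z"
    using assms unfolding classical_model3_def by auto
  have i: "integrable M (\<lambda>x. X x * Z x)" "integrable M (\<lambda>x. Y x * Z x)" "integrable M X"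
     "integrable M (\<lambda>x. X x * Y x)"
    using bin_int[OF p] bin_prod b by auto
  have "integral\<^sup>L M (\<lambda>x. X x * Y x) \<le> integral\<^sup>L M (\<lambda>x. X x - X x * Z x + Y x * Z x)"
    apply (rule integral_mono)
    using i b bin3[of "X x" "Y x" "Z x" for x] unfolding bin_rv_def by auto
  thus ?thesis using i by simp
qed

lemma upperX:
  assumes "classical_model3 M X Y Z"
  shows "integral\<^sup>L M (\<lambda>x. X x * Y x) \<le> integral\<^sup>L M X \<and> 0 \<le> integral\<^sup>L M (\<lambda>x. X x * Y x)"
proof -
  have p: "prob_space M" and b: "bin_rv M X" "bin_rv M Y" "bin_rv M Z"
    using assms unfolding classical_model3_def by auto
  have i: "integrable M X" "integrable M (\<lambda>x. X x * Y x)"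
    using bin_int[OF p] bin_prod b by auto
  have "integral\<^sup>L M (\<lambda>x. X x * Y x) \<le> integral\<^sup>L M X"
    apply (rule integral_mono)
    using i b bin3[of "X x" "Y x" "Z x" for x] unfolding bin_rv_def by auto
  moreover have "0 \<le> integral\<^sup>L M (\<lambda>x. X x * Y x)"
    apply (rule Bochner_Integration.integral_nonneg)
    using b bin3[of "X x" "Y x" "Z x" for x] unfolding bin_rv_def by auto
  ultimately show ?thesis by simp
qed

theorem mainTheorem2:
  shows
  "(\<forall>(M::'a measure) A1 A2 B1.
      classical_model3 M A1 A2 B1 \<and>
      integral\<^sup>L M A1 = 1/2 \<and> integral\<^sup>L M A2 = 1/2 \<and> integral\<^sup>L M B1 = 1/2 \<and>
      integral\<^sup>L M (\<lambda>x. A1 x * B1 x) = 1/4 + sqrt 2 / 8 \<and>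
      integral\<^sup>L M (\<lambda>x. A2 x * B1 x) = 1/4 + sqrt 2 / 8
      \<longrightarrow> sqrt 2 / 4 \<le> integral\<^sup>L M (\<lambda>x. A1 x * A2 x) \<and>
          integral\<^sup>L M (\<lambda>x. A1 x * A2 x) \<le> 1/2)
   \<and>
   (\<forall>(N::'b measure) A1 A2 B2.
      classical_model3 N A1 A2 B2 \<and>
      integral\<^sup>L N A1 = 1/2 \<and> integral\<^sup>L N A2 = 1/2 \<and> integral\<^sup>L N B2 = 1/2 \<and>
      integral\<^sup>L N (\<lambda>x. A1 x * B2 x) = 1/4 + sqrt 2 / 8 \<and>
      integral\<^sup>L N (\<lambda>x. A2 x * B2 x) = 1/4 - sqrt 2 / 8
      \<longrightarrow> 0 \<le> integral\<^sup>L N (\<lambda>x. A1 x * A2 x) \<and>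
          integral\<^sup>L N (\<lambda>x. A1 x * A2 x) \<le> 1/2 - sqrt 2 / 4)
   \<and>
   \<not> (\<exists>(M::'a measure) A1 A2 B1 (N::'b measure) C1 C2 B2.
      classical_model3 M A1 A2 B1 \<and>
      integral\<^sup>L M A1 = 1/2 \<and> integral\<^sup>L M A2 = 1/2 \<and> integral\<^sup>L M B1 = 1/2 \<and>
      integral\<^sup>L M (\<lambda>x. A1 x * B1 x) = 1/4 + sqrt 2 / 8 \<and>
      integral\<^sup>L M (\<lambda>x. A2 x * B1 x) = 1/4 + sqrt 2 / 8 \<and>
      classical_model3 N C1 C2 B2 \<and>
      integral\<^sup>L N C1 = 1/2 \<and> integral\<^sup>L N C2 = 1/2 \<and> integral\<^sup>L N B2 = 1/2 \<and>
      integral\<^sup>L N (\<lambda>y. C1 y * B2 y) = 1/4 + sqrt 2 / 8 \<and>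
      integral\<^sup>L N (\<lambda>y. C2 y * B2 y) = 1/4 - sqrt 2 / 8 \<and>
      integral\<^sup>L M (\<lambda>x. A1 x * A2 x) = integral\<^sup>L N (\<lambda>y. C1 y * C2 y))"
proof -
  have s2: "sqrt 2 / 4 > 1/2 - sqrt 2 / 4"
  proof -
    have "sqrt 2 > 1" by simp
    thus ?thesis by simp
  qed
  have T1: "\<And>(M::'a measure) A1 A2 B1.
      classical_model3 M A1 A2 B1 \<Longrightarrow>
      integral\<^sup>L M A1 = 1/2 \<Longrightarrow> integral\<^sup>L M A2 = 1/2 \<Longrightarrow> integral\<^sup>L M B1 = 1/2 \<Longrightarrow>
      integral\<^sup>L M (\<lambda>x. A1 x * B1 x) = 1/4 + sqrt 2 / 8 \<Longrightarrow>
      integral\<^sup>L M (\<lambda>x. A2 x * B1 x) = 1/4 + sqrt 2 / 8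
      \<Longrightarrow> sqrt 2 / 4 \<le> integral\<^sup>L M (\<lambda>x. A1 x * A2 x) \<and>
          integral\<^sup>L M (\<lambda>x. A1 x * A2 x) \<le> 1/2"
  proof -
    fix M :: "'a measure" and A1 A2 B1
    assume h: "classical_model3 M A1 A2 B1" "integral\<^sup>L M A1 = 1/2" "integral\<^sup>L M A2 = 1/2"
      "integral\<^sup>L M B1 = 1/2" "integral\<^sup>L M (\<lambda>x. A1 x * B1 x) = 1/4 + sqrt 2 / 8"
      "integral\<^sup>L M (\<lambda>x. A2 x * B1 x) = 1/4 + sqrt 2 / 8"
    show "sqrt 2 / 4 \<le> integral\<^sup>L M (\<lambda>x. A1 x * A2 x) \<and>
          integral\<^sup>L M (\<lambda>x. A1 x * A2 x) \<le> 1/2"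
      using lowerb[OF h(1)] upperX[OF h(1)] h by simp
  qed
  have T2: "\<And>(N::'b measure) A1 A2 B2.
      classical_model3 N A1 A2 B2 \<Longrightarrow>
      integral\<^sup>L N A1 = 1/2 \<Longrightarrow> integral\<^sup>L N A2 = 1/2 \<Longrightarrow> integral\<^sup>L N B2 = 1/2 \<Longrightarrow>
      integral\<^sup>L N (\<lambda>x. A1 x * B2 x) = 1/4 + sqrt 2 / 8 \<Longrightarrow>
      integral\<^sup>L N (\<lambda>x. A2 x * B2 x) = 1/4 - sqrt 2 / 8
      \<Longrightarrow> 0 \<le> integral\<^sup>L N (\<lambda>x. A1 x * A2 x) \<and>
          integral\<^sup>L N (\<lambda>x. A1 x * A2 x) \<le> 1/2 - sqrt 2 / 4"
  proof -
    fix N :: "'b measure" and A1 A2 B2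
    assume h: "classical_model3 N A1 A2 B2" "integral\<^sup>L N A1 = 1/2" "integral\<^sup>L N A2 = 1/2"
      "integral\<^sup>L N B2 = 1/2" "integral\<^sup>L N (\<lambda>x. A1 x * B2 x) = 1/4 + sqrt 2 / 8"
      "integral\<^sup>L N (\<lambda>x. A2 x * B2 x) = 1/4 - sqrt 2 / 8"
    show "0 \<le> integral\<^sup>L N (\<lambda>x. A1 x * A2 x) \<and>
          integral\<^sup>L N (\<lambda>x. A1 x * A2 x) \<le> 1/2 - sqrt 2 / 4"
      using upperb[OF h(1)] upperX[OF h(1)] h by simp
  qed
  show ?thesis
    apply (intro conjI notI)
      apply (use T1 in blast)
     apply (use T2 in blast)
    apply (elim exE conjE)
    subgoal for M A1 A2 B1 N C1 C2 B2
      using T1[of M A1 A2 B1] T2[of N C1 C2 B2] s2 by linarith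
    done
qed

end
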